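(* Let $(A_0,A_1,A_2)$ be an extendable collection of cap sets in $\mathbb{F}_3^n$ with $|A_1|=|A_2|$, and let $S\subseteq\{0,1,2\}^m$ be an admissible set consisting of $\binom{m}{w}$ vectors, each of weight $w$. Then \[|S(A_0,A_1,A_2)| = \binom{m}{w}|A_0|^{m-w}|A_1|^{w}.\]
   Context: A cap set is a set $A \subseteq \mathbb{F}_3^n$ such that the only solutions of $x+y+z=0$ with $x,y,z\in A$ are those with $x=y=z$. Cap sets $A_0,A_1,A_2\subseteq\mathbb{F}_3^n$ form an extendable collection if (1) whenever $x,y\in A_0$ (not necessarily distinct) and $z\in A_1\cup A_2$, $x+y+z\neq 0$; and (2) whenever $x\in A_0$, $y\in A_1$, $z\in A_2$, $x+y+z\neq 0$. A set $S\subseteq\{0,1,2\}^m$ is admissible if (1) for all distinct $s,s'\in S$ there are coordinates $i,j$ with $s_i=0\neq s'_i$ and $s_j\neq 0=s'_j$; and (2) for all distinct $s,s',s''\in S$ there is a coordinate $k$ such that the multiset $\{s_k,s'_k,s''_k\}$ equals $\{0,1,2\}$, $\{0,0,1\}$ or $\{0,0,2\}$. The weight of a vector is its number of nonzero coordinates. For $s\in\{0,1,2\}^m$, $s(A_0,A_1,A_2)=A_{s_1}\times\cdots\times A_{s_m}\subseteq\mathbb{F}_3^{nm}$ and $S(A_0,A_1,A_2)=\bigcup_{s\in S}s(A_0,A_1,A_2)$. *)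

theory Defs
  imports "HOL-Analysis.Analysis" "HOL-Library.Multiset"
begin

text \<open>Vectors of F_3^n are modelled as elements of type 3 ^ 'n (the type 3 is Z/3Z).\<close>

definition cap_set :: "('a::ab_group_add) set \<Rightarrow> bool" where
  "cap_set A \<longleftrightarrow> (\<forall>x\<in>A. \<forall>y\<in>A. \<forall>z\<in>A. x + y + z = 0 \<longrightarrow> x = y \<and> y = z)"

definition extendable :: "('a::ab_group_add) set \<Rightarrow> 'a set \<Rightarrow> 'a set \<Rightarrow> bool" where
  "extendable A0 A1 A2 \<longleftrightarrow> cap_set A0 \<and> cap_set A1 \<and> cap_set A2 \<and>
     (\<forall>x\<in>A0. \<forall>y\<in>A0. \<forall>z\<in>A1 \<union> A2. x + y + z \<noteq> 0) \<and>
     (\<forall>x\<in>A0. \<forall>y\<in>A1. \<forall>z\<in>A2. x + y + z \<noteq> 0)"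

definition ternary_vecs :: "nat \<Rightarrow> (nat \<Rightarrow> nat) set" where
  "ternary_vecs m = PiE {..<m} (\<lambda>_. {0,1,2})"

definition admissible :: "nat \<Rightarrow> (nat \<Rightarrow> nat) set \<Rightarrow> bool" where
  "admissible m S \<longleftrightarrow> S \<subseteq> ternary_vecs m \<and>
     (\<forall>s\<in>S. \<forall>s'\<in>S. s \<noteq> s' \<longrightarrow>
        (\<exists>i<m. \<exists>j<m. s i = 0 \<and> s' i \<noteq> 0 \<and> s j \<noteq> 0 \<and> s' j = 0)) \<and>
     (\<forall>s\<in>S. \<forall>s'\<in>S. \<forall>s''\<in>S. s \<noteq> s' \<and> s \<noteq> s'' \<and> s' \<noteq> s'' \<longrightarrow>
        (\<exists>k<m. {#s k, s' k, s'' k#} \<in> {{#0,1,2#}, {#0,0,1#}, {#0,0,2#}}))"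

definition weight :: "nat \<Rightarrow> (nat \<Rightarrow> nat) \<Rightarrow> nat" where
  "weight m s = card {i. i < m \<and> s i \<noteq> 0}"

definition sel :: "'a set \<Rightarrow> 'a set \<Rightarrow> 'a set \<Rightarrow> nat \<Rightarrow> 'a set" where
  "sel A0 A1 A2 k = (if k = 0 then A0 else if k = 1 then A1 else A2)"

text \<open>s(A0,A1,A2) = A_{s_1} x ... x A_{s_m}, as m-tuples of vectors (identified with F_3^{nm}).\<close>
definition vec_prod :: "nat \<Rightarrow> (nat \<Rightarrow> nat) \<Rightarrow> 'a set \<Rightarrow> 'a set \<Rightarrow> 'a set \<Rightarrow> (nat \<Rightarrow> 'a) set" where
  "vec_prod m s A0 A1 A2 = PiE {..<m} (\<lambda>i. sel A0 A1 A2 (s i))"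

definition set_prod :: "nat \<Rightarrow> (nat \<Rightarrow> nat) set \<Rightarrow> 'a set \<Rightarrow> 'a set \<Rightarrow> 'a set \<Rightarrow> (nat \<Rightarrow> 'a) set" where
  "set_prod m S A0 A1 A2 = (\<Union>s\<in>S. vec_prod m s A0 A1 A2)"

end

theory Submission
  imports Defs
begin

lemma three_zero: fixes z :: "3 ^ 'n" shows "z + z + z = 0"
proof -
  have "\<And>a::3. a + a + a = 0"
  proof -
    fix a :: 3
    have "a + a + a = of_nat 3 * a" by (simp add: algebra_simps)
    also have "(of_nat 3 :: 3) = 0" by simp
    finally show "a + a + a = 0" by simp
  qed
  then show ?thesis by (simp add: vec_eq_iff)
qed

lemma disj01: assumes "extendable A0 A1 A2" shows "A0 \<inter> (A1 \<union> A2) = ({} :: (3^'n) set)"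
  using assms three_zero unfolding extendable_def by blast

lemma card_vec_prod:
  fixes A0 A1 A2 :: "(3 ^ 'n) set"
  assumes "card A1 = card A2" "s \<in> ternary_vecs m" "weight m s = w"
  shows "card (vec_prod m s A0 A1 A2) = card A0 ^ (m - w) * card A1 ^ w"
proof -
  have "card (vec_prod m s A0 A1 A2) = (\<Prod>i<m. card (sel A0 A1 A2 (s i)))"
    unfolding vec_prod_def by (simp add: card_PiE)
  also have "\<dots> = (\<Prod>i<m. if s i = 0 then card A0 else card A1)"
    by (rule prod.cong) (auto simp: sel_def assms(1))
  also have "\<dots> = (\<Prod>i\<in>{..<m} \<inter> {i. s i = 0}. card A0) * (\<Prod>i\<in>{..<m} \<inter> - {i. s i = 0}. card A1)"
    by (rule prod.If_cases) simp
  also have "\<dots> = card A0 ^ card ({..<m} \<inter> {i. s i = 0}) * card A1 ^ card ({..<m} \<inter> - {i. s i = 0})"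
    by simp
  also have "{..<m} \<inter> - {i. s i = 0} = {i. i < m \<and> s i \<noteq> 0}" by auto
  also have "card {i. i < m \<and> s i \<noteq> 0} = w" using assms(3) by (simp add: weight_def)
  also have "card ({..<m} \<inter> {i. s i = 0}) = m - w"
  proof -
    have "{..<m} \<inter> {i. s i = 0} = {..<m} - {i. i < m \<and> s i \<noteq> 0}" by auto
    moreover have "{i. i < m \<and> s i \<noteq> 0} \<subseteq> {..<m}" by auto
    ultimately show ?thesis using assms(3) by (simp add: weight_def card_Diff_subset finite_subset)
  qed
  finally show ?thesis .
qed

theorem lemma2p11:
  fixes A0 A1 A2 :: "(3 ^ 'n) set" and S :: "(nat \<Rightarrow> nat) set" and m w :: nat
  assumes "extendable A0 A1 A2"
    and "card A1 = card A2"
    and "admissible m S"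
    and "card S = m choose w"
    and "\<forall>s\<in>S. weight m s = w"
  shows "card (set_prod m S A0 A1 A2) = (m choose w) * card A0 ^ (m - w) * card A1 ^ w"
proof -
  have St: "S \<subseteq> ternary_vecs m" using assms(3) by (simp add: admissible_def)
  have fin: "finite S" using St unfolding ternary_vecs_def
    by (rule finite_subset) (auto intro: finite_PiE)
  have D: "disjoint_family_on (\<lambda>s. vec_prod m s A0 A1 A2) S"
    unfolding disjoint_family_on_def
  proof (intro ballI impI)
    fix s s' assume "s \<in> S" "s' \<in> S" "s \<noteq> s'"
    then obtain i where i: "i < m" "s i = 0" "s' i \<noteq> 0"
      using assms(3) unfolding admissible_def by blast
    have "sel A0 A1 A2 (s i) \<inter> sel A0 A1 A2 (s' i) = {}"
      using i disj01[OF assms(1)] by (auto simp: sel_def)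
    show "vec_prod m s A0 A1 A2 \<inter> vec_prod m s' A0 A1 A2 = {}"
    proof (rule ccontr)
      assume "vec_prod m s A0 A1 A2 \<inter> vec_prod m s' A0 A1 A2 \<noteq> {}"
      then obtain x where "x \<in> vec_prod m s A0 A1 A2" "x \<in> vec_prod m s' A0 A1 A2" by blast
      then have "x i \<in> sel A0 A1 A2 (s i)" "x i \<in> sel A0 A1 A2 (s' i)"
        using i(1) unfolding vec_prod_def PiE_iff by blast+
      then show False using \<open>sel A0 A1 A2 (s i) \<inter> sel A0 A1 A2 (s' i) = {}\<close> by blast
    qed
  qed
  have "card (set_prod m S A0 A1 A2) = (\<Sum>s\<in>S. card (vec_prod m s A0 A1 A2))"
    unfolding set_prod_def by (rule card_UN_disjoint') (use D fin in \<open>auto simp: vec_prod_def intro!: finite_PiE\<close>)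
  also have "\<dots> = (\<Sum>s\<in>S. card A0 ^ (m - w) * card A1 ^ w)"
  proof (rule sum.cong)
    fix s assume "s \<in> S"
    then show "card (vec_prod m s A0 A1 A2) = card A0 ^ (m - w) * card A1 ^ w"
      using St assms(5) by (intro card_vec_prod[OF assms(2)]) auto
  qed simp
  finally show ?thesis using assms(4) by simp
qed

end
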